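(* Let $R,R'\subseteq S_n$ be the top-$l$ and top-$m$ partial rankings $R: a_1\succ\cdots\succ a_l\succ[n]\setminus\{a_1,\dots,a_l\}$ and $R': b_1\succ\cdots\succ b_m\succ[n]\setminus\{b_1,\dots,b_m\}$. Let $\{b_{i_1},\dots,b_{i_q}\}=\{b_1,\dots,b_m\}\setminus\{a_1,\dots,a_l\}$ with $i_1<\cdots<i_q$, and let $R''\subseteq R$ be the top-$(l+q)$ partial ranking $a_1\succ\cdots\succ a_l\succ b_{i_1}\succ\cdots\succ b_{i_q}\succ[n]\setminus\{a_1,\dots,a_l,b_1,\dots,b_m\}$. If $\tau$ is uniformly distributed on $R'$, then $\Pi_R(\tau)$ is uniformly distributed on $R''$.
   Context: $S_n$ is the symmetric group on $[n]$; $\sigma\in S_n$ is identified with the full ranking $\sigma(1)\succ\cdots\succ\sigma(n)$. For distinct items $x,y$, $\{x,y\}$ is discordant for $\sigma,\tau$ if $(\sigma^{-1}(x)-\sigma^{-1}(y))(\tau^{-1}(x)-\tau^{-1}(y))<0$. The Kendall distance $d(\sigma,\tau)$ is the number of unordered discordant pairs. For $0\le k\le n$ and distinct $c_1,\dots,c_k\in[n]$, the top-$k$ partial ranking $c_1\succ\cdots\succ c_k\succ[n]\setminus\{c_1,\dots,c_k\}$ is the set $\{\sigma\in S_n:\sigma(i)=c_i,\ i\le k\}$. For $\tau\in S_n$, $\Pi_R(\tau)$ denotes the unique element of $R$ minimising $\rho\mapsto d(\rho,\tau)$ over $\rho\in R$. *)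

theory Defs
  imports "HOL-Combinatorics.Permutations" "HOL-Probability.Probability_Mass_Function"
begin

text \<open>A full ranking of [n] = {1..n} is a permutation sigma of {1..n};
  sigma i is the item in position i, inv sigma x is the position of item x.\<close>

definition discordant :: "(nat \<Rightarrow> nat) \<Rightarrow> (nat \<Rightarrow> nat) \<Rightarrow> nat \<Rightarrow> nat \<Rightarrow> bool" where
  "discordant \<sigma> \<tau> x y \<longleftrightarrow>
     (real (inv \<sigma> x) - real (inv \<sigma> y)) * (real (inv \<tau> x) - real (inv \<tau> y)) < 0"

definition kendall :: "nat \<Rightarrow> (nat \<Rightarrow> nat) \<Rightarrow> (nat \<Rightarrow> nat) \<Rightarrow> nat" where
  "kendall n \<sigma> \<tau> = card {(x, y). x \<in> {1..n} \<and> y \<in> {1..n} \<and> x < y \<and> discordant \<sigma> \<tau> x y}"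

definition topk :: "nat \<Rightarrow> nat list \<Rightarrow> (nat \<Rightarrow> nat) set" where
  "topk n cs = {\<sigma>. \<sigma> permutes {1..n} \<and> (\<forall>i < length cs. \<sigma> (i + 1) = cs ! i)}"

definition proj :: "nat \<Rightarrow> (nat \<Rightarrow> nat) set \<Rightarrow> (nat \<Rightarrow> nat) \<Rightarrow> (nat \<Rightarrow> nat)" where
  "proj n R \<tau> = (THE \<rho>. \<rho> \<in> R \<and> (\<forall>\<rho>' \<in> R. kendall n \<rho> \<tau> \<le> kendall n \<rho>' \<tau>))"

end

theory Submission
  imports Defs
begin

definition bef :: "(nat\<Rightarrow>nat) \<Rightarrow> nat \<Rightarrow> nat \<Rightarrow> bool" where
  "bef \<sigma> x y \<longleftrightarrow> inv \<sigma> x < inv \<sigma> y"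

definition agree :: "nat \<Rightarrow> nat list \<Rightarrow> (nat\<Rightarrow>nat) \<Rightarrow> (nat\<Rightarrow>nat) \<Rightarrow> bool" where
  "agree n as \<rho> \<tau> \<longleftrightarrow> (\<forall>x\<in>{1..n}-set as. \<forall>y\<in>{1..n}-set as. bef \<rho> x y = bef \<tau> x y)"

fun idx :: "nat list \<Rightarrow> nat \<Rightarrow> nat" where
  "idx [] x = 0" | "idx (a#xs) x = (if a = x then 0 else Suc (idx xs x))"

lemma idx_less: "x \<in> set xs \<Longrightarrow> idx xs x < length xs"
  by (induction xs) auto
lemma nth_idx: "x \<in> set xs \<Longrightarrow> xs ! idx xs x = x"
  by (induction xs) auto
lemma idx_nth: "distinct xs \<Longrightarrow> i < length xs \<Longrightarrow> idx xs (xs ! i) = i"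
proof (induction xs arbitrary: i)
  case (Cons a xs) then show ?case by (cases i) (auto simp: nth_mem)
qed simp

lemma inv_mem: assumes "\<sigma> permutes {1..n}" "x \<in> {1..n}" shows "inv \<sigma> x \<in> {1..n}"
  using permutes_in_image[OF permutes_inv[OF assms(1)]] assms(2) by simp

lemma inv_neq: assumes "\<sigma> permutes S" "x \<noteq> y" shows "inv \<sigma> x \<noteq> inv \<sigma> y"
  using permutes_inverses(1)[OF assms(1)] assms(2) by metis

lemma real_sign: fixes a b c d :: real assumes "a \<noteq> b" "c \<noteq> d"
  shows "(a - b) * (c - d) < 0 \<longleftrightarrow> (a < b) \<noteq> (c < d)"
  using assms by (auto simp: mult_less_0_iff)

lemma disc_iff:
  assumes "\<sigma> permutes S" "\<tau> permutes S" "x \<noteq> y"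
  shows "discordant \<sigma> \<tau> x y \<longleftrightarrow> bef \<sigma> x y \<noteq> bef \<tau> x y"
proof -
  have a: "inv \<sigma> x \<noteq> inv \<sigma> y" "inv \<tau> x \<noteq> inv \<tau> y" using inv_neq[OF assms(1) assms(3)] inv_neq[OF assms(2) assms(3)] by auto
  have b: "real (inv \<sigma> x) \<noteq> real (inv \<sigma> y)" "real (inv \<tau> x) \<noteq> real (inv \<tau> y)" using a by auto
  show ?thesis unfolding discordant_def bef_def using real_sign[OF b] by simp
qed

lemma disc_sym: "discordant \<sigma> \<tau> x y = discordant \<sigma> \<tau> y x"
proof -
  have e: "(A - B) * (C - D) = (B - A) * (D - C)" for A B C D :: real by (simp add: algebra_simps)
  show ?thesis unfolding discordant_def
    by (subst e[of "real (inv \<sigma> x)"], rule refl)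
qed

lemma bef_asym: assumes "\<sigma> permutes S" "x \<noteq> y" shows "bef \<sigma> y x = (\<not> bef \<sigma> x y)"
proof -
  have "inv \<sigma> x \<noteq> inv \<sigma> y" using inv_neq[OF assms] .
  thus ?thesis unfolding bef_def by linarith
qed

lemma topk_pos:
  assumes "\<rho> \<in> topk n as" "i < length as"
  shows "inv \<rho> (as!i) = i+1"
  using assms unfolding topk_def by (auto simp: permutes_inv_eq)

lemma topk_pos2:
  assumes "\<rho> \<in> topk n as" "y \<in> {1..n}" "y \<notin> set as"
  shows "inv \<rho> y > length as"
proof (rule ccontr)
  assume nt: "\<not> inv \<rho> y > length as"
  have p: "\<rho> permutes {1..n}" using assms unfolding topk_def by auto
  define j where "j = inv \<rho> y"
  have j: "j \<in> {1..n}" using inv_mem[OF p assms(2)] j_def by simp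
  have "\<rho> j = y" using j_def permutes_inverses(1)[OF p] by simp
  moreover have "j - 1 < length as" "j - 1 + 1 = j" using nt j j_def by auto
  moreover have "\<forall>i<length as. \<rho> (i+1) = as ! i" using assms(1) unfolding topk_def by simp
  ultimately have "y = as ! (j-1)" by metis
  thus False using assms(3) \<open>j - 1 < length as\<close> nth_mem by metis
qed

lemma bef_topk:
  assumes "\<rho> \<in> topk n as" "distinct as" "x \<in> {1..n}" "y \<in> {1..n}" "x \<in> set as \<or> y \<in> set as"
  shows "bef \<rho> x y = (if x \<in> set as then (if y \<in> set as then idx as x < idx as y else True) else False)"
proof -
  have ix: "inv \<rho> z = idx as z + 1" if "z \<in> set as" for z
    using topk_pos[OF assms(1), of "idx as z"] that idx_less nth_idx by simp
  show ?thesis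
  proof (cases "x \<in> set as")
    case xa: True
    show ?thesis
    proof (cases "y \<in> set as")
      case True then show ?thesis using xa ix[OF xa] ix[OF True] unfolding bef_def by simp
    next
      case False
      have "idx as x < length as" using idx_less[OF xa] .
      moreover have "inv \<rho> x = idx as x + 1" using ix[OF xa] .
      moreover have "length as < inv \<rho> y" using topk_pos2[OF assms(1) assms(4) False] .
      ultimately have "inv \<rho> x < inv \<rho> y" by linarith
      then show ?thesis using xa False unfolding bef_def by simp
    qed
  next
    case xn: False
    hence ya: "y \<in> set as" using assms(5) by blast
    have "idx as y < length as" using idx_less[OF ya] .
    moreover have "inv \<rho> y = idx as y + 1" using ix[OF ya] .
    moreover have "length as < inv \<rho> x" using topk_pos2[OF assms(1) assms(3) xn] .
    ultimately have "\<not> inv \<rho> x < inv \<rho> y" by linarith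
    then show ?thesis using xn unfolding bef_def by simp
  qed
qed

lemma card_below:
  assumes p: "\<sigma> permutes {1..n}" and x: "x \<in> {1..n}"
  shows "card {y\<in>{1..n}. inv \<sigma> y < inv \<sigma> x} = inv \<sigma> x - 1"
proof -
  let ?k = "inv \<sigma> x"
  have k: "?k \<in> {1..n}" using inv_mem[OF p x] .
  have "{y\<in>{1..n}. inv \<sigma> y < ?k} = \<sigma> ` {1..<?k}"
  proof (rule set_eqI, rule iffI)
    fix y assume y: "y \<in> {y\<in>{1..n}. inv \<sigma> y < ?k}"
    have "inv \<sigma> y \<in> {1..n}" using inv_mem[OF p] y by auto
    thus "y \<in> \<sigma> ` {1..<?k}" using y permutes_inverses(1)[OF p, of y]
      by (metis (no_types, lifting) atLeastAtMost_iff atLeastLessThan_iff image_eqI mem_Collect_eq)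
  next
    fix y assume "y \<in> \<sigma> ` {1..<?k}"
    then obtain i where i: "i \<in> {1..<?k}" "y = \<sigma> i" by auto
    have "i \<in> {1..n}" using i k by auto
    thus "y \<in> {y\<in>{1..n}. inv \<sigma> y < ?k}" using i permutes_inverses(2)[OF p, of i]
       permutes_in_image[OF p] by auto
  qed
  moreover have "card (\<sigma> ` {1..<?k}) = card {1..<?k}"
    by (rule card_image, rule inj_on_subset[OF permutes_inj[OF p]], simp)
  ultimately show ?thesis by simp
qed

lemma order_determines:
  assumes p: "\<sigma> permutes {1..n}" and q: "\<sigma>' permutes {1..n}"
    and h: "\<forall>x\<in>{1..n}. \<forall>y\<in>{1..n}. bef \<sigma> x y = bef \<sigma>' x y"
  shows "\<sigma> = \<sigma>'"
proof -
  have "inv \<sigma> x = inv \<sigma>' x" for x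
  proof (cases "x \<in> {1..n}")
    case True
    have "{y\<in>{1..n}. inv \<sigma> y < inv \<sigma> x} = {y\<in>{1..n}. inv \<sigma>' y < inv \<sigma>' x}"
      using h True unfolding bef_def by auto
    hence "inv \<sigma> x - 1 = inv \<sigma>' x - 1" using card_below[OF p True] card_below[OF q True] by simp
    moreover have "inv \<sigma> x \<ge> 1" "inv \<sigma>' x \<ge> 1" using inv_mem[OF p True] inv_mem[OF q True] by auto
    ultimately show ?thesis by simp
  next
    case False
    then show ?thesis using permutes_not_in[OF permutes_inv[OF p]] permutes_not_in[OF permutes_inv[OF q]] by simp
  qed
  hence "inv \<sigma> = inv \<sigma>'" by auto
  thus ?thesis using permutes_inv_inv[OF p] permutes_inv_inv[OF q] by metis
qed

definition pl :: "nat list \<Rightarrow> nat \<Rightarrow> nat" where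
  "pl xs i = (if 1 \<le> i \<and> i \<le> length xs then xs!(i-1) else i)"

lemma pl_perm:
  assumes d: "distinct xs" and s: "set xs = {1..length xs}"
  shows "pl xs permutes {1..length xs}"
proof (rule bij_imp_permutes)
  show "bij_betw (pl xs) {1..length xs} {1..length xs}"
    unfolding bij_betw_def
  proof
    show "inj_on (pl xs) {1..length xs}"
    proof (rule inj_onI)
      fix i j assume i: "i \<in> {1..length xs}" and j: "j \<in> {1..length xs}" and e: "pl xs i = pl xs j"
      have "xs!(i-1) = xs!(j-1)" using e i j by (simp add: pl_def)
      moreover have "i - 1 < length xs" "j - 1 < length xs" using i j by auto
      ultimately have "i-1 = j-1" using nth_eq_iff_index_eq[OF d] by blast
      thus "i = j" using i j by auto
    qed
    show "pl xs ` {1..length xs} = {1..length xs}"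
    proof
      show "pl xs ` {1..length xs} \<subseteq> {1..length xs}"
      proof
        fix y assume "y \<in> pl xs ` {1..length xs}"
        then obtain i where i: "i \<in> {1..length xs}" "y = pl xs i" by auto
        hence "y = xs ! (i-1)" "i - 1 < length xs" by (auto simp: pl_def)
        hence "y \<in> set xs" using nth_mem by metis
        thus "y \<in> {1..length xs}" using s by simp
      qed
      show "{1..length xs} \<subseteq> pl xs ` {1..length xs}"
      proof
        fix y assume "y \<in> {1..length xs}"
        hence y: "y \<in> set xs" using s by simp
        have "idx xs y < length xs" using idx_less[OF y] .
        moreover have "pl xs (idx xs y + 1) = y" using calculation nth_idx[OF y] by (simp add: pl_def)
        ultimately show "y \<in> pl xs ` {1..length xs}" by (metis atLeastAtMost_iff image_eqI le_add2 Suc_eq_plus1 Suc_leI)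
      qed
    qed
  qed
  show "x \<notin> {1..length xs} \<Longrightarrow> pl xs x = x" for x by (auto simp: pl_def)
qed

lemma pl_nth: "i < length xs \<Longrightarrow> pl xs (i+1) = xs!i"
  by (simp add: pl_def)

lemma pl_inv:
  assumes d: "distinct xs" and s: "set xs = {1..length xs}" and x: "x \<in> set xs"
  shows "inv (pl xs) x = idx xs x + 1"
proof -
  have "pl xs (idx xs x + 1) = x" using pl_nth[OF idx_less[OF x]] nth_idx[OF x] by simp
  thus ?thesis using permutes_inv_eq[OF pl_perm[OF d s]] by blast
qed

lemma idx_filter:
  "x \<in> set xs \<Longrightarrow> y \<in> set xs \<Longrightarrow> P x \<Longrightarrow> P y \<Longrightarrow>
   (idx (filter P xs) x < idx (filter P xs) y) = (idx xs x < idx xs y)"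
  by (induction xs) auto

lemma idx_append: "x \<notin> set ys \<Longrightarrow> idx (ys @ zs) x = length ys + idx zs x"
  by (induction ys) auto

lemma idx_append1: "x \<in> set ys \<Longrightarrow> idx (ys @ zs) x = idx ys x"
  by (induction ys) auto

lemma construct:
  assumes dc: "distinct cs" and sc: "set cs \<subseteq> {1..n}" and t: "\<tau> permutes {1..n}"
  defines "L \<equiv> filter (\<lambda>x. x \<notin> set cs) (map \<tau> [1..<n+1])"
  shows "pl (cs @ L) \<in> topk n cs \<and> agree n cs (pl (cs @ L)) \<tau>"
proof -
  define T where "T = map \<tau> [1..<n+1]"
  have lenT: "length T = n" by (simp add: T_def)
  have setT: "set T = {1..n}" unfolding T_def using permutes_image[OF t]
    by (metis atLeastLessThanSuc_atLeastAtMost Suc_eq_plus1 set_map set_upt)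
  have dT: "distinct T" unfolding T_def
    using permutes_inj[OF t] by (simp add: distinct_map inj_on_subset)
  have idxT: "idx T x = inv \<tau> x - 1" if x: "x \<in> {1..n}" for x
  proof -
    have k: "inv \<tau> x \<in> {1..n}" using inv_mem[OF t x] .
    have kk: "inv \<tau> x - 1 < length [1..<n+1]" using k by auto
    have "T ! (inv \<tau> x - 1) = \<tau> ([1..<n+1] ! (inv \<tau> x - 1))" unfolding T_def
      using nth_map[OF kk] by blast
    also have "[1..<n+1] ! (inv \<tau> x - 1) = 1 + (inv \<tau> x - 1)" using kk by (simp del: upt_Suc)
    finally have "T ! (inv \<tau> x - 1) = \<tau> (inv \<tau> x - 1 + 1)" by simp
    also have "inv \<tau> x - 1 + 1 = inv \<tau> x" using k by auto
    finally have "T ! (inv \<tau> x - 1) = x" using permutes_inverses(1)[OF t, of x] by simp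
    moreover have "inv \<tau> x - 1 < length T" using k lenT by auto
    ultimately show ?thesis using idx_nth[OF dT] by metis
  qed
  have LT: "L = filter (\<lambda>x. x \<notin> set cs) T" unfolding L_def T_def ..
  have setL: "set L = {1..n} - set cs" using LT setT by auto
  have dL: "distinct L" using LT dT by simp
  define xs where "xs = cs @ L"
  have dxs: "distinct xs" unfolding xs_def using dc dL setL by auto
  have sxs: "set xs = {1..n}" unfolding xs_def using setL sc by auto
  have lxs: "length xs = n" using distinct_card[OF dxs] sxs by simp
  have sxs': "set xs = {1..length xs}" using sxs lxs by simp
  have p: "pl xs permutes {1..n}" using pl_perm[OF dxs sxs'] lxs by simp
  have top: "pl xs \<in> topk n cs"
    unfolding topk_def using p pl_nth[of _ xs] by (simp add: xs_def nth_append)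
  have ag: "agree n cs (pl xs) \<tau>"
    unfolding agree_def
  proof (intro ballI)
    fix x y assume x: "x \<in> {1..n} - set cs" and y: "y \<in> {1..n} - set cs"
    have xL: "x \<in> set L" and yL: "y \<in> set L" using x y setL by auto
    have "inv (pl xs) x = length cs + idx L x + 1"
      using pl_inv[OF dxs sxs'] xL x idx_append[of x cs L] unfolding xs_def by auto
    moreover have "inv (pl xs) y = length cs + idx L y + 1"
      using pl_inv[OF dxs sxs'] yL y idx_append[of y cs L] unfolding xs_def by auto
    moreover have "(idx L x < idx L y) = (idx T x < idx T y)"
      unfolding LT using idx_filter[of x T y "\<lambda>x. x \<notin> set cs"] x y setT by auto
    moreover have "idx T x = inv \<tau> x - 1" "idx T y = inv \<tau> y - 1" using idxT x y by auto
    moreover have "inv \<tau> x \<ge> 1" "inv \<tau> y \<ge> 1" using inv_mem[OF t] x y by fastforce+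
    ultimately show "bef (pl xs) x y = bef \<tau> x y" unfolding bef_def by linarith
  qed
  show ?thesis using top ag unfolding xs_def by simp
qed

lemma bef_refl: "\<not> bef \<sigma> x x" by (simp add: bef_def)

lemma proj_eq:
  assumes da: "distinct as" and t: "\<tau> permutes {1..n}"
    and r0: "\<rho>0 \<in> topk n as" and ag: "agree n as \<rho>0 \<tau>"
  shows "proj n (topk n as) \<tau> = \<rho>0"
proof -
  define D where "D \<rho> = {(x,y). x\<in>{1..n} \<and> y\<in>{1..n} \<and> x<y \<and> discordant \<rho> \<tau> x y}" for \<rho>
  have kD: "kendall n \<rho> \<tau> = card (D \<rho>)" for \<rho> by (simp add: kendall_def D_def)
  have fin: "finite (D \<rho>)" for \<rho>
    by (rule finite_subset[of _ "{1..n} \<times> {1..n}"]) (auto simp: D_def)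
  have p0: "\<rho>0 permutes {1..n}" using r0 by (simp add: topk_def)
  have same: "bef \<rho> x y = bef \<rho>0 x y"
    if r: "\<rho> \<in> topk n as" and x: "x \<in> {1..n}" and y: "y \<in> {1..n}" and a: "x \<in> set as \<or> y \<in> set as" for \<rho> x y
    using bef_topk[OF r da x y a] bef_topk[OF r0 da x y a] by simp
  have sub: "D \<rho>0 \<subseteq> D \<rho>" if r: "\<rho> \<in> topk n as" for \<rho>
  proof
    fix p assume "p \<in> D \<rho>0"
    then obtain x y where pe: "p = (x,y)" and x: "x \<in> {1..n}" and y: "y \<in> {1..n}" and xy: "x < y"
      and dc: "discordant \<rho>0 \<tau> x y" unfolding D_def by auto
    have pr: "\<rho> permutes {1..n}" using r by (simp add: topk_def)
    have ne: "x \<noteq> y" using xy by simp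
    have b: "bef \<rho>0 x y \<noteq> bef \<tau> x y" using disc_iff[OF p0 t ne] dc by simp
    have a: "x \<in> set as \<or> y \<in> set as"
    proof (rule ccontr)
      assume "\<not> (x \<in> set as \<or> y \<in> set as)"
      hence "bef \<rho>0 x y = bef \<tau> x y" using ag x y unfolding agree_def by auto
      thus False using b by simp
    qed
    have "bef \<rho> x y \<noteq> bef \<tau> x y" using b same[OF r x y a] by simp
    hence "discordant \<rho> \<tau> x y" using disc_iff[OF pr t ne] by simp
    thus "p \<in> D \<rho>" using pe x y xy unfolding D_def by auto
  qed
  have strict: "D \<rho>0 \<noteq> D \<rho>" if r: "\<rho> \<in> topk n as" and ne: "\<rho> \<noteq> \<rho>0" for \<rho>
  proof -
    have pr: "\<rho> permutes {1..n}" using r by (simp add: topk_def)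
    obtain x y where x: "x \<in> {1..n}" and y: "y \<in> {1..n}" and d: "bef \<rho> x y \<noteq> bef \<rho>0 x y"
      using order_determines[OF pr p0] ne by blast
    have xy: "x \<noteq> y" using d bef_refl by metis
    have na: "\<not> (x \<in> set as \<or> y \<in> set as)" using same[OF r x y] d by blast
    hence "bef \<rho>0 x y = bef \<tau> x y" using ag x y unfolding agree_def by auto
    hence d1: "discordant \<rho> \<tau> x y" "\<not> discordant \<rho>0 \<tau> x y"
      using d disc_iff[OF pr t xy] disc_iff[OF p0 t xy] by auto
    show ?thesis
    proof (cases "x < y")
      case True
      hence "(x,y) \<in> D \<rho>" "(x,y) \<notin> D \<rho>0" using d1 x y unfolding D_def by auto
      thus ?thesis by blast
    next
      case False
      hence yx: "y < x" using xy by simp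
      have "discordant \<rho> \<tau> y x" "\<not> discordant \<rho>0 \<tau> y x" using d1 disc_sym by metis+
      hence "(y,x) \<in> D \<rho>" "(y,x) \<notin> D \<rho>0" using yx x y unfolding D_def by auto
      thus ?thesis by blast
    qed
  qed
  show ?thesis
    unfolding proj_def
  proof (rule the_equality)
    show "\<rho>0 \<in> topk n as \<and> (\<forall>\<rho>'\<in>topk n as. kendall n \<rho>0 \<tau> \<le> kendall n \<rho>' \<tau>)"
      using r0 sub fin by (simp add: kD card_mono)
  next
    fix \<rho> assume h: "\<rho> \<in> topk n as \<and> (\<forall>\<rho>'\<in>topk n as. kendall n \<rho> \<tau> \<le> kendall n \<rho>' \<tau>)"
    show "\<rho> = \<rho>0"
    proof (rule ccontr)
      assume ne: "\<rho> \<noteq> \<rho>0"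
      have "D \<rho>0 \<subset> D \<rho>" using sub[of \<rho>] strict[of \<rho>] h ne by blast
      hence "card (D \<rho>0) < card (D \<rho>)" using fin by (simp add: psubset_card_mono)
      moreover have "card (D \<rho>) \<le> card (D \<rho>0)" using h r0 kD by metis
      ultimately show False by simp
    qed
  qed
qed

lemma proj_props:
  assumes da: "distinct as" and sa: "set as \<subseteq> {1..n}" and t: "\<tau> permutes {1..n}"
  shows "proj n (topk n as) \<tau> \<in> topk n as \<and> agree n as (proj n (topk n as) \<tau>) \<tau>"
proof -
  define L where "L = filter (\<lambda>x. x \<notin> set as) (map \<tau> [1..<n+1])"
  have c: "pl (as @ L) \<in> topk n as \<and> agree n as (pl (as @ L)) \<tau>"
    using construct[OF da sa t] unfolding L_def .
  hence "proj n (topk n as) \<tau> = pl (as @ L)" using proj_eq[OF da t] by blast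
  thus ?thesis using c by simp
qed

lemma topk_finite: "finite (topk n cs)"
  by (rule finite_subset[OF _ finite_permutations[of "{1..n}"]]) (auto simp: topk_def)

lemma topk_perm: "\<sigma> \<in> topk n cs \<Longrightarrow> \<sigma> permutes {1..n}"
  by (simp add: topk_def)

lemma topk_nonempty:
  assumes "distinct cs" "set cs \<subseteq> {1..n}" shows "topk n cs \<noteq> {}"
  using construct[OF assms permutes_id] by blast

lemma topk_compose:
  assumes p: "\<pi> permutes C" and C: "C \<subseteq> {1..n}" and dj: "set cs \<inter> C = {}" and s: "\<sigma> \<in> topk n cs"
  shows "\<pi> \<circ> \<sigma> \<in> topk n cs"
proof -
  have "\<pi> permutes {1..n}" using permutes_subset[OF p C] .
  hence "\<pi> \<circ> \<sigma> permutes {1..n}" using permutes_compose[OF topk_perm[OF s]] by blast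
  moreover have "(\<pi> \<circ> \<sigma>) (i+1) = cs ! i" if i: "i < length cs" for i
  proof -
    have "\<sigma> (i+1) = cs ! i" using s i by (simp add: topk_def)
    moreover have "cs ! i \<notin> C" using dj nth_mem[OF i] by blast
    ultimately show ?thesis using permutes_not_in[OF p] by simp
  qed
  ultimately show ?thesis by (simp add: topk_def)
qed

lemma map_topk:
  assumes t: "\<tau> \<in> topk n bs" and db: "distinct bs" and sb: "set bs \<subseteq> {1..n}"
  shows "map \<tau> [1..<n+1] = bs @ drop (length bs) (map \<tau> [1..<n+1])"
proof -
  have lb: "length bs \<le> n" using distinct_card[OF db] card_mono[OF _ sb] by fastforce
  have "take (length bs) (map \<tau> [1..<n+1]) = bs"
  proof (rule nth_equalityI)
    show "length (take (length bs) (map \<tau> [1..<n+1])) = length bs" using lb by (simp del: upt_Suc)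
    fix i assume "i < length (take (length bs) (map \<tau> [1..<n+1]))"
    hence i: "i < length bs" "i < n" using lb by auto
    have "take (length bs) (map \<tau> [1..<n+1]) ! i = \<tau> ([1..<n+1] ! i)" using i by (simp del: upt_Suc)
    also have "[1..<n+1] ! i = i + 1" using i by (simp del: upt_Suc)
    also have "\<tau> (i+1) = bs ! i" using t i by (simp add: topk_def)
    finally show "take (length bs) (map \<tau> [1..<n+1]) ! i = bs ! i" .
  qed
  thus ?thesis by (metis append_take_drop_id)
qed

theorem lemma7:
  fixes n :: nat and as bs :: "nat list"
  assumes "distinct as" and "set as \<subseteq> {1..n}"
    and "distinct bs" and "set bs \<subseteq> {1..n}"
  shows "map_pmf (proj n (topk n as)) (pmf_of_set (topk n bs))
         = pmf_of_set (topk n (as @ filter (\<lambda>b. b \<notin> set as) bs))"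
proof -
  note da = assms(1) and sa = assms(2) and db = assms(3) and sb = assms(4)
  define f where "f = proj n (topk n as)"
  define cs where "cs = as @ filter (\<lambda>b. b \<notin> set as) bs"
  define C where "C = {1..n} - set as - set bs"
  define R' where "R' = topk n bs"
  define R'' where "R'' = topk n cs"
  define \<mu> where "\<mu> = map_pmf f (pmf_of_set R')"
  have dcs: "distinct cs" using da db by (auto simp: cs_def)
  have scs: "set cs \<subseteq> {1..n}" using sa sb by (auto simp: cs_def)
  have setcs: "set cs = set as \<union> set bs" by (auto simp: cs_def)
  have C: "C \<subseteq> {1..n}" by (auto simp: C_def)
  have finR': "finite R'" "R' \<noteq> {}" using topk_finite topk_nonempty[OF db sb] by (auto simp: R'_def)
  have finR'': "finite R''" "R'' \<noteq> {}" using topk_finite topk_nonempty[OF dcs scs] by (auto simp: R''_def)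
  have setR': "set_pmf (pmf_of_set R') = R'" using finR' by simp
  have inR'': "f \<tau> \<in> R''" if t: "\<tau> \<in> R'" for \<tau>
  proof -
    have tp: "\<tau> permutes {1..n}" using topk_perm t unfolding R'_def by blast
    define L where "L = filter (\<lambda>x. x \<notin> set as) (map \<tau> [1..<n+1])"
    have c: "pl (as @ L) \<in> topk n as \<and> agree n as (pl (as @ L)) \<tau>"
      using construct[OF da sa tp] unfolding L_def .
    hence fe: "f \<tau> = pl (as @ L)" using proj_eq[OF da tp] unfolding f_def by blast
    have "L = filter (\<lambda>x. x \<notin> set as) bs @ filter (\<lambda>x. x \<notin> set as) (drop (length bs) (map \<tau> [1..<n+1]))"
      unfolding L_def by (subst map_topk[OF t[unfolded R'_def] db sb]) simp
    hence asL: "as @ L = cs @ filter (\<lambda>x. x \<notin> set as) (drop (length bs) (map \<tau> [1..<n+1]))"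
      by (simp add: cs_def)
    have "f \<tau> permutes {1..n}" using c fe topk_perm by metis
    moreover have "f \<tau> (i+1) = cs ! i" if i: "i < length cs" for i
    proof -
      have "i < length (as @ L)" using i asL by simp
      hence "f \<tau> (i+1) = (as @ L) ! i" using fe pl_nth by simp
      also have "\<dots> = cs ! i" using asL i by (simp add: nth_append)
      finally show ?thesis .
    qed
    ultimately show ?thesis by (simp add: R''_def topk_def)
  qed
  have setmu: "set_pmf \<mu> \<subseteq> R''" using inR'' setR' by (auto simp: \<mu>_def)
  have inj_comp: "inj (\<lambda>\<sigma>::nat\<Rightarrow>nat. \<pi> \<circ> \<sigma>)" if p: "\<pi> permutes C" for \<pi> :: "nat \<Rightarrow> nat"
  proof (rule injI)
    fix a b :: "nat \<Rightarrow> nat" assume "\<pi> \<circ> a = \<pi> \<circ> b"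
    hence "\<And>x. \<pi> (a x) = \<pi> (b x)" by (metis comp_apply)
    hence "\<And>x. inv \<pi> (\<pi> (a x)) = inv \<pi> (\<pi> (b x))" by simp
    thus "a = b" using permutes_inverses(2)[OF p] by (simp add: fun_eq_iff)
  qed
  have invar: "map_pmf (\<lambda>\<sigma>. \<pi> \<circ> \<sigma>) \<mu> = \<mu>" if p: "\<pi> permutes C" for \<pi>
  proof -
    have pi: "inv \<pi> permutes C" using permutes_inv[OF p] .
    have djb: "set bs \<inter> C = {}" by (auto simp: C_def)
    have djA: "set as \<inter> C = {}" by (auto simp: C_def)
    have imR': "(\<lambda>\<sigma>. \<pi> \<circ> \<sigma>) ` R' = R'"
    proof
      show "(\<lambda>\<sigma>. \<pi> \<circ> \<sigma>) ` R' \<subseteq> R'" using topk_compose[OF p C djb] by (auto simp: R'_def)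
      show "R' \<subseteq> (\<lambda>\<sigma>. \<pi> \<circ> \<sigma>) ` R'"
      proof
        fix \<tau> assume t: "\<tau> \<in> R'"
        have "inv \<pi> \<circ> \<tau> \<in> R'" using topk_compose[OF pi C djb] t by (auto simp: R'_def)
        moreover have "\<tau> = \<pi> \<circ> (inv \<pi> \<circ> \<tau>)" using permutes_inverses(1)[OF p] by (simp add: fun_eq_iff)
        ultimately show "\<tau> \<in> (\<lambda>\<sigma>. \<pi> \<circ> \<sigma>) ` R'" by blast
      qed
    qed
    have equi: "f (\<pi> \<circ> \<tau>) = \<pi> \<circ> f \<tau>" if t: "\<tau> \<in> R'" for \<tau>
    proof -
      have tp: "\<tau> permutes {1..n}" using topk_perm t unfolding R'_def by blast
      have pN: "\<pi> permutes {1..n}" using permutes_subset[OF p C] .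
      have ptp: "\<pi> \<circ> \<tau> permutes {1..n}" using permutes_compose[OF tp pN] .
      have fp: "f \<tau> \<in> topk n as" and fa: "agree n as (f \<tau>) \<tau>"
        using proj_props[OF da sa tp] unfolding f_def by auto
      have fpp: "f \<tau> permutes {1..n}" using topk_perm[OF fp] .
      have r0: "\<pi> \<circ> f \<tau> \<in> topk n as" using topk_compose[OF p C djA fp] .
      have bcomp: "bef (\<pi> \<circ> \<sigma>) x y = bef \<sigma> (inv \<pi> x) (inv \<pi> y)" if sp: "\<sigma> permutes {1..n}" for \<sigma> x y
      proof -
        have "inv (\<pi> \<circ> \<sigma>) = inv \<sigma> \<circ> inv \<pi>"
          using o_inv_distrib[OF permutes_bij[OF pN] permutes_bij[OF sp]] .
        thus ?thesis by (simp add: bef_def)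
      qed
      have mem: "inv \<pi> x \<in> {1..n} - set as" if x: "x \<in> {1..n} - set as" for x
      proof (cases "x \<in> C")
        case True
        hence "inv \<pi> x \<in> C" using permutes_in_image[OF pi] by simp
        thus ?thesis by (auto simp: C_def)
      next
        case False
        thus ?thesis using permutes_not_in[OF pi] x by simp
      qed
      have ag: "agree n as (\<pi> \<circ> f \<tau>) (\<pi> \<circ> \<tau>)"
        unfolding agree_def
      proof (intro ballI)
        fix x y assume x: "x \<in> {1..n} - set as" and y: "y \<in> {1..n} - set as"
        have "bef (f \<tau>) (inv \<pi> x) (inv \<pi> y) = bef \<tau> (inv \<pi> x) (inv \<pi> y)"
          using fa mem[OF x] mem[OF y] unfolding agree_def by blast
        thus "bef (\<pi> \<circ> f \<tau>) x y = bef (\<pi> \<circ> \<tau>) x y" using bcomp[OF fpp] bcomp[OF tp] by simp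
      qed
      show ?thesis using proj_eq[OF da ptp r0 ag] unfolding f_def .
    qed
    have "map_pmf (\<lambda>\<sigma>. \<pi> \<circ> \<sigma>) \<mu> = map_pmf (\<lambda>\<tau>. \<pi> \<circ> f \<tau>) (pmf_of_set R')"
      unfolding \<mu>_def map_pmf_comp ..
    also have "\<dots> = map_pmf (\<lambda>\<tau>. f (\<pi> \<circ> \<tau>)) (pmf_of_set R')"
      by (rule map_pmf_cong[OF refl]) (use equi setR' in auto)
    also have "\<dots> = map_pmf f (map_pmf (\<lambda>\<tau>. \<pi> \<circ> \<tau>) (pmf_of_set R'))"
      unfolding map_pmf_comp ..
    also have "map_pmf (\<lambda>\<tau>. \<pi> \<circ> \<tau>) (pmf_of_set R') = pmf_of_set R'"
      using map_pmf_of_set_inj[OF inj_on_subset[OF inj_comp[OF p]] finR'(2) finR'(1)] imR' by simp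
    finally show ?thesis unfolding \<mu>_def .
  qed
  have trans: "\<exists>\<pi>. \<pi> permutes C \<and> \<pi> \<circ> \<rho>1 = \<rho>2" if r1: "\<rho>1 \<in> R''" and r2: "\<rho>2 \<in> R''" for \<rho>1 \<rho>2
  proof -
    have p1: "\<rho>1 permutes {1..n}" and p2: "\<rho>2 permutes {1..n}" using r1 r2 topk_perm unfolding R''_def by blast+
    define \<pi> where "\<pi> = \<rho>2 \<circ> inv \<rho>1"
    have pN: "\<pi> permutes {1..n}" unfolding \<pi>_def using permutes_compose[OF permutes_inv[OF p1] p2] .
    have fx: "\<pi> x = x" if x: "x \<in> {1..n} - C" for x
    proof -
      have "x \<in> set cs" using x setcs by (auto simp: C_def)
      then obtain i where i: "i < length cs" "x = cs ! i" by (metis in_set_conv_nth)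
      have "inv \<rho>1 x = i + 1" using topk_pos[OF r1[unfolded R''_def] i(1)] i(2) by simp
      moreover have "\<rho>2 (i+1) = x" using r2 i by (simp add: R''_def topk_def)
      ultimately show ?thesis by (simp add: \<pi>_def)
    qed
    have "\<pi> permutes C" using permutes_superset[OF pN fx] .
    moreover have "\<pi> \<circ> \<rho>1 = \<rho>2" unfolding \<pi>_def using permutes_inverses(2)[OF p1] by (simp add: fun_eq_iff)
    ultimately show ?thesis by blast
  qed
  obtain \<tau>0 where t0: "\<tau>0 \<in> R'" using finR' by blast
  define \<rho>1 where "\<rho>1 = f \<tau>0"
  have r1: "\<rho>1 \<in> R''" using inR''[OF t0] by (simp add: \<rho>1_def)
  have const: "pmf \<mu> \<rho> = pmf \<mu> \<rho>1" if r: "\<rho> \<in> R''" for \<rho>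
  proof -
    obtain \<pi> where p: "\<pi> permutes C" and e: "\<pi> \<circ> \<rho>1 = \<rho>"using trans[OF r1 r] by blast
    have "pmf \<mu> \<rho> = pmf (map_pmf (\<lambda>\<sigma>. \<pi> \<circ> \<sigma>) \<mu>) (\<pi> \<circ> \<rho>1)" using invar[OF p] e by simp
    also have "\<dots> = pmf \<mu> \<rho>1" using pmf_map_inj'[OF inj_comp[OF p]] .
    finally show ?thesis .
  qed
  have sum1: "(\<Sum>\<rho>\<in>R''. pmf \<mu> \<rho>) = 1" using sum_pmf_eq_1[OF finR''(1) setmu] .
  hence c: "real (card R'') * pmf \<mu> \<rho>1 = 1" using const by simp
  have "\<mu> = pmf_of_set R''"
  proof (rule pmf_eqI)
    fix \<rho>
    show "pmf \<mu> \<rho> = pmf (pmf_of_set R'') \<rho>"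
    proof (cases "\<rho> \<in> R''")
      case True
      have "card R'' > 0" using finR'' by (simp add: card_gt_0_iff)
      hence pos: "real (card R'') \<noteq> 0" by simp
      have e1: "pmf (pmf_of_set R'') \<rho> = 1 / real (card R'')"
        using pmf_of_set[OF finR''(2) finR''(1), of \<rho>] True by simp
      have e2: "pmf \<mu> \<rho>1 = 1 / real (card R'')" using c pos by (simp add: field_simps)
      show ?thesis using const[OF True] e1 e2 by simp
    next
      case False
      hence "\<rho> \<notin> set_pmf \<mu>" using setmu by blast
      then show ?thesis using False pmf_of_set[OF finR''(2) finR''(1)] by (simp add: pmf_eq_0_set_pmf)
    qed
  qed
  thus ?thesis unfolding \<mu>_def f_def R'_def R''_def cs_def .
qed

end
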